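(* Let two users be at $(x_1,y_1,0),(x_2,y_2,0)$ with $-\frac{D_{\rm L}}{2}\le x_m\le\frac{D_{\rm L}}{2}$, ordered so that $y_1^2\le y_2^2$, let $d>0$, $\eta>0$, $\sigma^2>0$, and for an antenna at $(x,0,d)$ let $\delta_m(x)=(x-x_m)^2+y_m^2+d^2$. Define $$R_2^{\rm NOMA}=\log\left(1+\frac{\eta P_2}{\eta P_1+\sigma^2\delta_2(x)}\right),\quad R_0^{\rm NOMA}=\log\left(1+\frac{\eta P_2}{\eta P_1+\sigma^2\delta_1(x)}\right),\quad R_1^{\rm NOMA}=\log\left(1+\frac{\eta P_1}{\sigma^2\delta_1(x)}\right),$$ and consider $$\min_{P_1,P_2\ge0,\ x}\ P_1+P_2\quad\text{s.t.}\quad R_m^{\rm NOMA}\ge R\ (m=0,1,2),\quad -\frac{D_{\rm L}}{2}\le x\le\frac{D_{\rm L}}{2}.$$ If $R\ge\frac12$, then an optimal solution is $$x^*=\frac{x_2}{e^R+1}+\frac{e^Rx_1}{e^R+1},\quad P_1^*=\tilde\epsilon(x^*-x_1)^2+\tilde\tau_1,\quad P_2^*=\frac{\tilde\epsilon\eta}{\sigma^2}P_1^*+\tilde\epsilon(x^*-x_2)^2+\tilde\tau_2,$$ where $\tilde\epsilon=\frac{\sigma^2}{\eta}(e^R-1)$ and $\tilde\tau_m=\tilde\epsilon(y_m^2+d^2)$.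
   Context: Two-user power-domain NOMA with a single pinching antenna at $(x,0,d)$ on a waveguide of height $d$; user 1 performs successive interference cancellation: it first decodes user 2's signal (rate $R_0^{\rm NOMA}$), then its own (rate $R_1^{\rm NOMA}$); user 2 decodes its own signal treating user 1's as interference (rate $R_2^{\rm NOMA}$). $P_m$ is the power for user $m$'s signal, $R$ is the target rate, $\log$ is natural. *)

theory Defs
  imports Complex_Main
begin

definition delta :: "real \<Rightarrow> real \<Rightarrow> real \<Rightarrow> real \<Rightarrow> real" where
  "delta d xm ym x = (x - xm)^2 + ym^2 + d^2"

definition R2_NOMA :: "real \<Rightarrow> real \<Rightarrow> real \<Rightarrow> real \<Rightarrow> real \<Rightarrow> real \<Rightarrow> real \<Rightarrow> real \<Rightarrow> real" where
  "R2_NOMA eta sigma2 d x2 y2 P1 P2 x =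
     ln (1 + eta * P2 / (eta * P1 + sigma2 * delta d x2 y2 x))"

definition R0_NOMA :: "real \<Rightarrow> real \<Rightarrow> real \<Rightarrow> real \<Rightarrow> real \<Rightarrow> real \<Rightarrow> real \<Rightarrow> real \<Rightarrow> real" where
  "R0_NOMA eta sigma2 d x1 y1 P1 P2 x =
     ln (1 + eta * P2 / (eta * P1 + sigma2 * delta d x1 y1 x))"

definition R1_NOMA :: "real \<Rightarrow> real \<Rightarrow> real \<Rightarrow> real \<Rightarrow> real \<Rightarrow> real \<Rightarrow> real \<Rightarrow> real" where
  "R1_NOMA eta sigma2 d x1 y1 P1 x =
     ln (1 + eta * P1 / (sigma2 * delta d x1 y1 x))"

definition noma_feasible ::
  "real \<Rightarrow> real \<Rightarrow> real \<Rightarrow> real \<Rightarrow> real \<Rightarrow> real \<Rightarrow> real \<Rightarrow> real \<Rightarrow> real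
   \<Rightarrow> real \<Rightarrow> real \<Rightarrow> real \<Rightarrow> bool" where
  "noma_feasible eta sigma2 d DL R x1 y1 x2 y2 P1 P2 x \<longleftrightarrow>
     P1 \<ge> 0 \<and> P2 \<ge> 0 \<and>
     R0_NOMA eta sigma2 d x1 y1 P1 P2 x \<ge> R \<and>
     R1_NOMA eta sigma2 d x1 y1 P1 x \<ge> R \<and>
     R2_NOMA eta sigma2 d x2 y2 P1 P2 x \<ge> R \<and>
     - DL / 2 \<le> x \<and> x \<le> DL / 2"

definition noma_optimal ::
  "real \<Rightarrow> real \<Rightarrow> real \<Rightarrow> real \<Rightarrow> real \<Rightarrow> real \<Rightarrow> real \<Rightarrow> real \<Rightarrow> real
   \<Rightarrow> real \<Rightarrow> real \<Rightarrow> real \<Rightarrow> bool" where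
  "noma_optimal eta sigma2 d DL R x1 y1 x2 y2 P1 P2 x \<longleftrightarrow>
     noma_feasible eta sigma2 d DL R x1 y1 x2 y2 P1 P2 x \<and>
     (\<forall>Q1 Q2 z. noma_feasible eta sigma2 d DL R x1 y1 x2 y2 Q1 Q2 z \<longrightarrow> P1 + P2 \<le> Q1 + Q2)"

end

theory Submission
  imports Defs
begin

lemma ln_ge_aux: "(0::real) \<le> t \<Longrightarrow> (R \<le> ln (1+t)) = (exp R - 1 \<le> t)"
  using ln_ge_iff[of "1+t" R] by auto

lemma delta_pos: "(d::real) > 0 \<Longrightarrow> delta d xm ym x > 0"
  unfolding delta_def by (simp add: add_nonneg_pos)

lemma feas_bounds:
  assumes d: "d > 0" and e: "eta > 0" and s: "sigma2 > 0"
    and f: "noma_feasible eta sigma2 d DL R x1 y1 x2 y2 Q1 Q2 z"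
  shows "(exp R - 1) * (sigma2 * delta d x1 y1 z) \<le> eta * Q1"
    and "(exp R - 1) * (eta * Q1 + sigma2 * delta d x2 y2 z) \<le> eta * Q2"
proof -
  have D1: "delta d x1 y1 z > 0" "delta d x2 y2 z > 0" using delta_pos d by auto
  from f have q: "Q1 \<ge> 0" "Q2 \<ge> 0"
    and r1: "R \<le> ln (1 + eta * Q1 / (sigma2 * delta d x1 y1 z))"
    and r2: "R \<le> ln (1 + eta * Q2 / (eta * Q1 + sigma2 * delta d x2 y2 z))"
    unfolding noma_feasible_def R1_NOMA_def R2_NOMA_def by auto
  have p1: "sigma2 * delta d x1 y1 z > 0" using s D1 by simp
  have p2: "eta * Q1 + sigma2 * delta d x2 y2 z > 0" using s D1 e q
    by (simp add: add_nonneg_pos)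
  from r1 have "exp R - 1 \<le> eta * Q1 / (sigma2 * delta d x1 y1 z)"
    using ln_ge_aux p1 q e by simp
  then show "(exp R - 1) * (sigma2 * delta d x1 y1 z) \<le> eta * Q1"
    using p1 by (simp add: pos_le_divide_eq)
  from r2 have "exp R - 1 \<le> eta * Q2 / (eta * Q1 + sigma2 * delta d x2 y2 z)"
    using ln_ge_aux p2 q e by simp
  then show "(exp R - 1) * (eta * Q1 + sigma2 * delta d x2 y2 z) \<le> eta * Q2"
    using p2 by (simp add: pos_le_divide_eq)
qed

lemma quad_min:
  fixes E z x1 x2 :: real
  assumes "E > 0"
  shows "E * (x2 / (E + 1) + E * x1 / (E + 1) - x1)^2 + (x2 / (E + 1) + E * x1 / (E + 1) - x2)^2
         \<le> E * (z - x1)^2 + (z - x2)^2"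
proof -
  define xs where "xs = x2 / (E + 1) + E * x1 / (E + 1)"
  have xs': "xs = (x2 + E * x1) / (E+1)" unfolding xs_def by (simp add: add_divide_distrib)
  have xs: "(E+1) * xs = x2 + E * x1" unfolding xs' using assms by simp
  have "E * (z - x1)^2 + (z - x2)^2 - (E * (xs - x1)^2 + (xs - x2)^2) = (E+1)*(z-xs)^2"
  proof -
    have "E * (z - x1)^2 + (z - x2)^2 - (E * (xs - x1)^2 + (xs - x2)^2)
        = (E+1)*z^2 - 2*z*(x2 + E*x1) - (E+1)*xs^2 + 2*xs*(x2+E*x1)"
      by (simp add: power2_eq_square algebra_simps)
    also have "\<dots> = (E+1)*z^2 - 2*z*((E+1)*xs) - (E+1)*xs^2 + 2*xs*((E+1)*xs)"
      by (simp add: xs)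
    also have "\<dots> = (E+1)*(z-xs)^2" by (simp add: power2_eq_square algebra_simps)
    finally show ?thesis .
  qed
  moreover have "(E+1)*(z-xs)^2 \<ge> 0" using assms by simp
  ultimately show ?thesis unfolding xs_def[symmetric] by linarith
qed

theorem lemma6:
  fixes eta sigma2 d DL R x1 y1 x2 y2 :: real
  assumes "d > 0" and "eta > 0" and "sigma2 > 0"
    and "- DL / 2 \<le> x1" and "x1 \<le> DL / 2"
    and "- DL / 2 \<le> x2" and "x2 \<le> DL / 2"
    and "y1^2 \<le> y2^2"
    and "R \<ge> 1 / 2"
  shows "let eps = sigma2 / eta * (exp R - 1);
             tau1 = eps * (y1^2 + d^2);
             tau2 = eps * (y2^2 + d^2);
             xs = x2 / (exp R + 1) + exp R * x1 / (exp R + 1);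
             P1s = eps * (xs - x1)^2 + tau1;
             P2s = eps * eta / sigma2 * P1s + eps * (xs - x2)^2 + tau2
         in noma_optimal eta sigma2 d DL R x1 y1 x2 y2 P1s P2s xs"
proof -
  define E where "E = exp R"
  define a where "a = E - 1"
  define s where "s = sigma2 / eta"
  define xs where "xs = x2 / (E + 1) + E * x1 / (E + 1)"
  define D1 where "D1 = delta d x1 y1 xs"
  define D2 where "D2 = delta d x2 y2 xs"
  define P1 where "P1 = s * a * D1"
  define P2 where "P2 = a * P1 + s * a * D2"
  have e: "eta > 0" and sg: "sigma2 > 0" and dp: "d > 0" using assms by auto
  have E1: "E \<ge> 1" unfolding E_def using assms by simp
  have a0: "a \<ge> 0" unfolding a_def using E1 by simp
  have s0: "s > 0" unfolding s_def using e sg by simp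
  have D1p: "D1 > 0" and D2p: "D2 > 0" unfolding D1_def D2_def using delta_pos dp by auto
  have eta_s: "eta * s = sigma2" unfolding s_def using e by simp
  have xs': "xs = (x2 + E * x1) / (E+1)" unfolding xs_def by (simp add: add_divide_distrib)
  have xsd: "xs - x1 = (x2 - x1) / (E+1)" "xs - x2 = E * (x1 - x2) / (E+1)"
    unfolding xs' using E1 by (auto simp: field_simps)
  have "(xs - x1)^2 \<le> (xs - x2)^2"
  proof -
    have "(xs - x2)^2 = E^2 * (xs - x1)^2" unfolding xsd
      by (simp add: power2_eq_square field_simps)
    moreover have "E^2 \<ge> 1" using E1 by simp
    ultimately show ?thesis by (metis mult_right_mono mult_1 zero_le_power2)
  qed
  hence D12: "D1 \<le> D2" unfolding D1_def D2_def delta_def using assms(8) by linarith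
  have xs_in: "- DL / 2 \<le> xs \<and> xs \<le> DL / 2"
  proof -
    have c: "xs = (1/(E+1)) * x2 + (E/(E+1)) * x1" unfolding xs_def by simp
    have w: "1/(E+1) \<ge> 0" "E/(E+1) \<ge> 0" "1/(E+1) + E/(E+1) = 1" using E1
      by (auto simp: add_divide_distrib[symmetric])
    have "(1/(E+1)) * x2 + (E/(E+1)) * x1 \<le> (1/(E+1)) * (DL/2) + (E/(E+1)) * (DL/2)"
      using w assms by (intro add_mono mult_left_mono) auto
    moreover have "(1/(E+1)) * (-DL/2) + (E/(E+1)) * (-DL/2) \<le> (1/(E+1)) * x2 + (E/(E+1)) * x1"
      using w assms by (intro add_mono mult_left_mono) auto
    ultimately show ?thesis unfolding c
      by (metis distrib_right mult_1 w(3))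
  qed
  have P10: "P1 \<ge> 0" unfolding P1_def using s0 a0 D1p by simp
  have P20: "P2 \<ge> 0" unfolding P2_def using s0 a0 D2p P10 by simp
  have lnE: "ln E = R" unfolding E_def by simp
  have feas: "noma_feasible eta sigma2 d DL R x1 y1 x2 y2 P1 P2 xs"
  proof -
    have r1: "eta * P1 / (sigma2 * D1) = a"
      proof -
      have "eta * P1 = a * (sigma2 * D1)" unfolding P1_def using eta_s[symmetric]
        by (simp add: algebra_simps)
      thus ?thesis using D1p sg by simp
    qed
    have den2: "eta * P1 + sigma2 * D2 > 0" using e P10 sg D2p by (simp add: add_nonneg_pos)
    have r2: "eta * P2 / (eta * P1 + sigma2 * D2) = a"
    proof -
      have "eta * P2 = a * (eta * P1 + sigma2 * D2)"
        unfolding P2_def using eta_s[symmetric] by (simp add: algebra_simps)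
      thus ?thesis using den2 by simp
    qed
    have den0: "eta * P1 + sigma2 * D1 > 0" using e P10 sg D1p by (simp add: add_nonneg_pos)
    have r0: "a \<le> eta * P2 / (eta * P1 + sigma2 * D1)"
    proof -
      have "a * (eta * P1 + sigma2 * D1) \<le> a * (eta * P1 + sigma2 * D2)"
        using D12 sg a0 by (intro mult_left_mono) auto
      also have "\<dots> = eta * P2"
        unfolding P2_def using eta_s[symmetric] by (simp add: algebra_simps)
      finally show ?thesis using den0 by (simp add: pos_le_divide_eq)
    qed
    have q1: "eta * P1 / (sigma2 * D1) \<ge> 0" using r1 a0 by simp
    have q0: "eta * P2 / (eta * P1 + sigma2 * D1) \<ge> 0" using r0 a0 by linarith
    have q2: "eta * P2 / (eta * P1 + sigma2 * D2) \<ge> 0" using r2 a0 by simp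
    show ?thesis unfolding noma_feasible_def R0_NOMA_def R1_NOMA_def R2_NOMA_def
      D1_def[symmetric] D2_def[symmetric]
      using P10 P20 xs_in ln_ge_aux[OF q1, of R] ln_ge_aux[OF q0, of R] ln_ge_aux[OF q2, of R]
        r1 r2 r0 E_def a_def by auto
  qed
  have opt: "P1 + P2 \<le> Q1 + Q2" if f: "noma_feasible eta sigma2 d DL R x1 y1 x2 y2 Q1 Q2 z" for Q1 Q2 z
  proof -
    have b1: "a * (sigma2 * delta d x1 y1 z) \<le> eta * Q1"
      and b2: "a * (eta * Q1 + sigma2 * delta d x2 y2 z) \<le> eta * Q2"
      using feas_bounds[OF dp e sg f] unfolding a_def E_def by auto
    have qm: "E * (xs - x1)^2 + (xs - x2)^2 \<le> E * (z - x1)^2 + (z - x2)^2"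
      unfolding xs_def using quad_min E1 by simp
    have qd: "E * D1 + D2 \<le> E * delta d x1 y1 z + delta d x2 y2 z"
      using qm unfolding D1_def D2_def delta_def by (simp add: algebra_simps)
    have "eta * (P1 + P2) = sigma2 * a * (E * D1 + D2)"
      unfolding P2_def P1_def a_def using eta_s[symmetric] by (simp add: algebra_simps)
    also have "\<dots> \<le> sigma2 * a * (E * delta d x1 y1 z + delta d x2 y2 z)"
      using qd sg a0 by (intro mult_left_mono) auto
    also have "\<dots> = E * (a * (sigma2 * delta d x1 y1 z)) + a * sigma2 * delta d x2 y2 z"
      by (simp add: algebra_simps)
    also have "\<dots> \<le> E * (eta * Q1) + a * sigma2 * delta d x2 y2 z"
      using b1 E1 by (intro add_right_mono mult_left_mono) auto
    also have "\<dots> = eta * Q1 + a * (eta * Q1 + sigma2 * delta d x2 y2 z)"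
      unfolding a_def by (simp add: algebra_simps)
    also have "\<dots> \<le> eta * Q1 + eta * Q2" using b2 by simp
    finally have "eta * (P1 + P2) \<le> eta * (Q1 + Q2)" by (simp add: algebra_simps)
    thus ?thesis using e by simp
  qed
  have eqs: "sigma2 / eta * (exp R - 1) * (xs - x1)^2 + sigma2 / eta * (exp R - 1) * (y1^2 + d^2) = P1"
    unfolding P1_def D1_def delta_def s_def a_def E_def by (simp add: algebra_simps)
  have eqs2: "sigma2 / eta * (exp R - 1) * eta / sigma2 * P1 + sigma2 / eta * (exp R - 1) * (xs - x2)^2
      + sigma2 / eta * (exp R - 1) * (y2^2 + d^2) = P2"
    unfolding P2_def D2_def delta_def s_def a_def E_def using e sg by (simp add: field_simps)
  show ?thesis unfolding Let_def E_def[symmetric] xs_def[symmetric]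
    unfolding E_def eqs eqs2 noma_optimal_def using feas opt by blast
qed

end
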